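(* Let $R$ be a commutative unital ring, $\mathfrak{b}\subsetneq R$ a radical ideal, and $(I_k)_{k=1}^\infty$ countably many ideals of $R$. Suppose that for every $r\in R\setminus\mathfrak{b}$ and every $k\in\mathbb{N}$ there exists $x\in R$ such that $rx\notin\mathfrak{b}$ and $(1-a)x\in\mathfrak{b}$ for some $a\in I_k$. Then there exists a maximal ideal $\mathfrak{m}\subsetneq R$ such that $I_k\not\subseteq\mathfrak{m}$ for all $k\in\mathbb{N}$. *)

theory Defs
  imports "HOL-Algebra.Algebra"
begin

definition radical_ideal :: "'a set \<Rightarrow> ('a, 'b) ring_scheme \<Rightarrow> bool" where
  "radical_ideal b R \<longleftrightarrow> ideal b R \<and>
     (\<forall>x \<in> carrier R. \<forall>n::nat. n \<ge> 1 \<longrightarrow> x [^]\<^bsub>R\<^esub> n \<in> b \<longrightarrow> x \<in> b)"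

end

theory Submission
  imports Defs
begin

lemma ideal_simpleI:
  fixes R (structure)
  assumes "cring R" "J \<subseteq> carrier R" "\<zero> \<in> J"
    and "\<And>x y. x \<in> J \<Longrightarrow> y \<in> J \<Longrightarrow> x \<oplus> y \<in> J"
    and "\<And>x. x \<in> J \<Longrightarrow> \<ominus> x \<in> J"
    and "\<And>x y. x \<in> J \<Longrightarrow> y \<in> carrier R \<Longrightarrow> x \<otimes> y \<in> J"
  shows "ideal J R"
proof -
  interpret cring R by fact
  show ?thesis
  proof (rule idealI)
    show "ring R" by (rule ring_axioms)
    show "subgroup J (add_monoid R)"
      using assms(2-5) by (intro add.subgroupI) (auto simp: a_inv_def)
    show "\<And>a x. a \<in> J \<Longrightarrow> x \<in> carrier R \<Longrightarrow> a \<otimes> x \<in> J" using assms(6) by blast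
    show "\<And>a x. a \<in> J \<Longrightarrow> x \<in> carrier R \<Longrightarrow> x \<otimes> a \<in> J"
      using assms(2,6) m_comm by (metis subsetD)
  qed
qed

lemma krull_exists:
  fixes R (structure)
  assumes cr: "cring R" and J: "ideal J R" and one: "\<one> \<notin> J"
  shows "\<exists>M. maximalideal M R \<and> J \<subseteq> M"
proof -
  interpret cring R by fact
  define A where "A = {K. ideal K R \<and> J \<subseteq> K \<and> \<one> \<notin> K}"
  have "\<forall>C\<in>chains A. \<exists>U\<in>A. \<forall>Xf\<in>C. Xf \<subseteq> U"
  proof
    fix C assume C: "C \<in> chains A"
    hence CA: "C \<subseteq> A" and ch: "\<And>Xf Y1. Xf \<in> C \<Longrightarrow> Y1 \<in> C \<Longrightarrow> Xf \<subseteq> Y1 \<or> Y1 \<subseteq> Xf"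
      unfolding chains_def chain_subset_def by auto
    show "\<exists>U\<in>A. \<forall>Xf\<in>C. Xf \<subseteq> U"
    proof (cases "C = {}")
      case True thus ?thesis using J one A_def by auto
    next
      case False
      then obtain K0 where K0: "K0 \<in> C" by auto
      have idC: "\<And>K. K \<in> C \<Longrightarrow> ideal K R" using CA A_def by auto
      have idU: "ideal (\<Union>C) R"
      proof (rule ideal_simpleI[OF cr])
        show "\<Union>C \<subseteq> carrier R"
        proof
          fix x assume "x \<in> \<Union>C"
          then obtain K where K: "K \<in> C" "x \<in> K" by blast
          show "x \<in> carrier R" using ideal.Icarr[OF idC[OF K(1)] K(2)] .
        qed
        show "\<zero> \<in> \<Union>C" using ideal.Icarr K0 additive_subgroup.zero_closed[OF ideal.axioms(1)[OF idC[OF K0]]] by blast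
        show "\<ominus> x \<in> \<Union>C" if "x \<in> \<Union>C" for x
        proof -
          from that obtain K where K: "K \<in> C" "x \<in> K" by blast
          have "\<ominus> x \<in> K" using additive_subgroup.a_inv_closed[OF ideal.axioms(1)[OF idC[OF K(1)]] K(2)] .
          thus ?thesis using K(1) by blast
        qed
        show "x \<otimes> y \<in> \<Union>C" if "x \<in> \<Union>C" "y \<in> carrier R" for x y
        proof -
          from that obtain K where K: "K \<in> C" "x \<in> K" by blast
          have "x \<otimes> y \<in> K" using ideal.I_r_closed[OF idC[OF K(1)] K(2) that(2)] .
          thus ?thesis using K(1) by blast
        qed
        show "x \<oplus> y \<in> \<Union>C" if "x \<in> \<Union>C" "y \<in> \<Union>C" for x y
        proof -
          from that obtain X1 Y1 where XY: "X1 \<in> C" "Y1 \<in> C" "x \<in> X1" "y \<in> Y1" by blast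
          show ?thesis
          proof (cases "X1 \<subseteq> Y1")
            case True
            hence "x \<oplus> y \<in> Y1" using additive_subgroup.a_closed[OF ideal.axioms(1)[OF idC[OF XY(2)]]] XY by blast
            thus ?thesis using XY(2) by blast
          next
            case False
            hence "Y1 \<subseteq> X1" using ch[OF XY(1,2)] by blast
            hence "x \<oplus> y \<in> X1" using additive_subgroup.a_closed[OF ideal.axioms(1)[OF idC[OF XY(1)]]] XY by blast
            thus ?thesis using XY(1) by blast
          qed
        qed
      qed
      moreover have "J \<subseteq> \<Union>C" using K0 CA A_def by auto
      moreover have "\<one> \<notin> \<Union>C" using CA A_def by auto
      ultimately have "\<Union>C \<in> A" unfolding A_def by blast
      thus ?thesis by (intro bexI[of _ "\<Union>C"]) auto
    qed
  qed
  from Zorn_Lemma2[OF this] obtain M where M: "M \<in> A" and Mmax: "\<forall>Xf\<in>A. M \<subseteq> Xf \<longrightarrow> Xf = M"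
    by blast
  have "maximalideal M R"
  proof (rule maximalidealI)
    show "ideal M R" using M A_def by auto
    show "carrier R \<noteq> M" using M A_def by auto
    fix K assume K: "ideal K R" "M \<subseteq> K" "K \<subseteq> carrier R"
    show "K = M \<or> K = carrier R"
    proof (cases "\<one> \<in> K")
      case True thus ?thesis using ideal.one_imp_carrier[OF K(1)] by auto
    next
      case False
      hence "K \<in> A" using K M A_def by auto
      thus ?thesis using Mmax K by auto
    qed
  qed
  thus ?thesis using M A_def by auto
qed

theorem mainTheorem19:
  fixes R :: "('a, 'b) ring_scheme" (structure)
    and b :: "'a set"
    and I :: "nat \<Rightarrow> 'a set"
  assumes "cring R"
    and "radical_ideal b R"
    and "b \<noteq> carrier R"
    and "\<And>k. ideal (I k) R"
    and "\<And>r k. r \<in> carrier R - b \<Longrightarrow>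
           \<exists>x \<in> carrier R. r \<otimes> x \<notin> b \<and> (\<exists>a \<in> I k. (\<one> \<ominus> a) \<otimes> x \<in> b)"
  shows "\<exists>m. maximalideal m R \<and> (\<forall>k. \<not> I k \<subseteq> m)"
proof -
  interpret cring R by fact
  have bI: "ideal b R" using assms(2) radical_ideal_def by blast
  have bsub: "b \<subseteq> carrier R" using bI ideal.axioms(1) additive_subgroup.a_subset by blast
  have one_b: "\<one> \<notin> b" using ideal.one_imp_carrier[OF bI] assms(3) by auto
  define P where "P = (\<lambda>r k x. x \<in> carrier R \<and> r \<otimes> x \<notin> b \<and> (\<exists>a \<in> I k. (\<one> \<ominus> a) \<otimes> x \<in> b))"
  define Xf where "Xf = (\<lambda>r k. SOME x. P r k x)"
  have XP: "P r k (Xf r k)" if "r \<in> carrier R - b" for r k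
    unfolding Xf_def using assms(5)[OF that, of k] P_def by (metis someI_ex)
  define s :: "nat \<Rightarrow> 'a" where "s = rec_nat \<one> (\<lambda>k v. v \<otimes> Xf v k)"
  have s0: "s 0 = \<one>" and sS: "\<And>k. s (Suc k) = s k \<otimes> Xf (s k) k" by (simp_all add: s_def)
  have sb: "s k \<in> carrier R - b" for k
  proof (induction k)
    case 0 thus ?case using s0 one_b by auto
  next
    case (Suc k) thus ?case using XP[OF Suc] sS P_def by auto
  qed
  have sa: "\<exists>a\<in>I k. (\<one> \<ominus> a) \<otimes> s (Suc k) \<in> b" for k
  proof -
    have Xc: "Xf (s k) k \<in> carrier R" and "\<exists>a \<in> I k. (\<one> \<ominus> a) \<otimes> Xf (s k) k \<in> b"
      using XP[OF sb[of k]] P_def by auto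
    then obtain a where a: "a \<in> I k" "(\<one> \<ominus> a) \<otimes> Xf (s k) k \<in> b" by auto
    have ac: "a \<in> carrier R" using a(1) assms(4) ideal.axioms(1) additive_subgroup.a_subset by blast
    have "(\<one> \<ominus> a) \<otimes> s (Suc k) = s k \<otimes> ((\<one> \<ominus> a) \<otimes> Xf (s k) k)"
      using sS sb[of k] Xc ac by (simp add: m_lcomm)
    also have "\<dots> \<in> b" using a(2) sb[of k] ideal.I_l_closed[OF bI] by blast
    finally show ?thesis using a(1) by blast
  qed
  have sdiv: "n \<le> m \<Longrightarrow> \<exists>y\<in>carrier R. s m = s n \<otimes> y" for n m
  proof (induction m rule: dec_induct)
    case base thus ?case using sb[of n] by (intro bexI[of _ \<one>]) auto
  next
    case (step m)
    then obtain y where y: "y \<in> carrier R" "s m = s n \<otimes> y" by auto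
    have Xc: "Xf (s m) m \<in> carrier R" using XP[OF sb[of m]] P_def by auto
    have "s (Suc m) = s n \<otimes> (y \<otimes> Xf (s m) m)" using sS y Xc sb[of n] by (simp add: m_assoc)
    thus ?case using y Xc by blast
  qed
  have up: "x \<otimes> s N \<in> b" if H: "x \<in> carrier R" "x \<otimes> s n \<in> b" "n \<le> N" for x n N
  proof -
    obtain u where u: "u \<in> carrier R" "s N = s n \<otimes> u" using sdiv[OF H(3)] by auto
    have "x \<otimes> s N = (x \<otimes> s n) \<otimes> u" using u that(1) sb[of n] by (simp add: m_assoc)
    thus ?thesis using ideal.I_r_closed[OF bI that(2) u(1)] by simp
  qed
  define J where "J = {x \<in> carrier R. \<exists>n. x \<otimes> s n \<in> b}"
  have JI: "ideal J R"
  proof (rule ideal_simpleI[OF assms(1)])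
    show "J \<subseteq> carrier R" using J_def by auto
    show "\<zero> \<in> J" unfolding J_def using sb[of 0] additive_subgroup.zero_closed[OF ideal.axioms(1)[OF bI]]
      by (auto intro!: exI[of _ 0])
    show "x \<oplus> y \<in> J" if H: "x \<in> J" "y \<in> J" for x y
    proof -
      obtain n m where nm: "x \<in> carrier R" "y \<in> carrier R" "x \<otimes> s n \<in> b" "y \<otimes> s m \<in> b"
        using H J_def by auto
      have "x \<otimes> s (max n m) \<in> b" "y \<otimes> s (max n m) \<in> b" using up nm by auto
      hence "x \<otimes> s (max n m) \<oplus> y \<otimes> s (max n m) \<in> b"
        using additive_subgroup.a_closed[OF ideal.axioms(1)[OF bI]] by blast
      hence "(x \<oplus> y) \<otimes> s (max n m) \<in> b" using nm sb by (simp add: l_distr)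
      thus ?thesis using nm J_def by auto
    qed
    show "\<ominus> x \<in> J" if H: "x \<in> J" for x
    proof -
      obtain n where n: "x \<in> carrier R" "x \<otimes> s n \<in> b" using H J_def by auto
      have "\<ominus> (x \<otimes> s n) \<in> b" using additive_subgroup.a_inv_closed[OF ideal.axioms(1)[OF bI] n(2)] .
      hence "(\<ominus> x) \<otimes> s n \<in> b" using n sb by (simp add: l_minus)
      thus ?thesis using n J_def by auto
    qed
    show "x \<otimes> y \<in> J" if H: "x \<in> J" "y \<in> carrier R" for x y
    proof -
      obtain n where n: "x \<in> carrier R" "x \<otimes> s n \<in> b" using H J_def by auto
      have "y \<otimes> (x \<otimes> s n) \<in> b" using ideal.I_l_closed[OF bI n(2) H(2)] .
      hence "(x \<otimes> y) \<otimes> s n \<in> b" using n sb H(2) by (simp add: m_lcomm m_comm)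
      thus ?thesis using n H J_def by auto
    qed
  qed
  have oneJ: "\<one> \<notin> J" using sb J_def by auto
  obtain M where M: "maximalideal M R" "J \<subseteq> M" using krull_exists[OF assms(1) JI oneJ] by blast
  have "\<not> I k \<subseteq> M" for k
  proof
    assume sub: "I k \<subseteq> M"
    obtain a where a: "a \<in> I k" "(\<one> \<ominus> a) \<otimes> s (Suc k) \<in> b" using sa by blast
    have ac: "a \<in> carrier R" using a(1) assms(4) ideal.axioms(1) additive_subgroup.a_subset by blast
    have "\<one> \<ominus> a \<in> J" using a ac J_def by auto
    hence m1: "\<one> \<ominus> a \<in> M" using M by auto
    have aM: "a \<in> M" using a sub by auto
    have "(\<one> \<ominus> a) \<oplus> a = \<one>" using ac by (simp add: a_minus_def a_assoc l_neg)
    hence "\<one> \<in> M" using additive_subgroup.a_closed[OF ideal.axioms(1)[OF maximalideal.axioms(1)[OF M(1)]] m1 aM]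
      by simp
    thus False using ideal.one_imp_carrier[OF maximalideal.axioms(1)[OF M(1)]] maximalideal.I_notcarr[OF M(1)]
      by auto
  qed
  thus ?thesis using M by blast
qed

end
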